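(* Let $N\ge 2$ and let $X(t)=(X_1(t),\dots,X_N(t))$, $t\ge 0$, be the queue-length process of a system of $N$ parallel queues with infinite buffers, modelled as a continuous-time Markov process on $\mathbb{Z}_+^N$ as follows. Packets arrive at queue $i$ according to a Poisson process of rate $\lambda_i>0$ (independently across queues), and when the system is in state $x=(x_1,\dots,x_N)$, a nonempty queue $i$ (i.e. $x_i>0$) releases a packet at a state-dependent rate $\mu_i(x)$, where the functions $\mu_i:\mathbb{Z}_+^N\to[0,\infty)$ are bounded. Assume the system is homogeneous: $\lambda_1=\dots=\lambda_N$, and the service rates are invariant under permutations of the queues (i.e. $\mu_{\pi(i)}(x_{\pi^{-1}(1)},\dots,x_{\pi^{-1}(N)})=\mu_i(x)$ for every permutation $\pi$ of $\{1,\dots,N\}$). Suppose that there exists an index $i$ such that $$\lambda_i>\limsup_{x_i\to\infty}\ \sup_{x_j:\,j\neq i}\ \mu_i(x).$$ Then, for every initial state $X(0)\in\mathbb{Z}_+^N$, the process is eventually saturated: $\min_{1\le i\le N} X_i(t)>0$ for all sufficiently large $t$ (almost surely), i.e. in the long run every queue has at least one packet pending for transmission.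
   Context: Interpretation: $X_i(t)$ is the number of packets waiting at station $i$ at time $t$ in a random access network; the service rate of a queue may depend on the whole state (e.g. on how many queues are simultaneously nonempty), modelling the coupling between stations contending for a shared channel. The supremum $\sup_{x_j:\,j\neq i}\mu_i(x)$ is taken over all values of the coordinates $x_j$, $j\ne i$, with $x_i$ fixed, and the $\limsup$ is then taken as $x_i\to\infty$. *)

theory Defs
  imports "HOL-Probability.Probability"
begin

text \<open>
  Queues are indexed by a finite type 'n (N = CARD('n)); a state is x :: 'n => nat.
  Events: Inl i = arrival at queue i (rate lam i), Inr i = departure from queue i
  (rate mu i x if x i > 0, else 0).

  The continuous-time Markov chain is realised by the standard competing-exponential-clocks
  construction: at the k-th jump, every event e gets a fresh Exp(1) clock E k e; event e
  fires after time E k e / rate x e; the next event is the one whose clock rings first.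
\<close>

definition ev_rate :: "('n \<Rightarrow> real) \<Rightarrow> ('n \<Rightarrow> ('n \<Rightarrow> nat) \<Rightarrow> real) \<Rightarrow> ('n \<Rightarrow> nat) \<Rightarrow> 'n + 'n \<Rightarrow> real" where
  "ev_rate lam mu x e = (case e of Inl i \<Rightarrow> lam i | Inr i \<Rightarrow> (if 0 < x i then mu i x else 0))"

definition active_events :: "('n \<Rightarrow> real) \<Rightarrow> ('n \<Rightarrow> ('n \<Rightarrow> nat) \<Rightarrow> real) \<Rightarrow> ('n \<Rightarrow> nat) \<Rightarrow> ('n + 'n) set" where
  "active_events lam mu x = {e. 0 < ev_rate lam mu x e}"

definition hold_time :: "('n::finite \<Rightarrow> real) \<Rightarrow> ('n \<Rightarrow> ('n \<Rightarrow> nat) \<Rightarrow> real) \<Rightarrow> ('n \<Rightarrow> nat) \<Rightarrow> ('n + 'n \<Rightarrow> real) \<Rightarrow> real" where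
  "hold_time lam mu x c = Min ((\<lambda>e. c e / ev_rate lam mu x e) ` active_events lam mu x)"

definition fired_event :: "('n::finite \<Rightarrow> real) \<Rightarrow> ('n \<Rightarrow> ('n \<Rightarrow> nat) \<Rightarrow> real) \<Rightarrow> ('n \<Rightarrow> nat) \<Rightarrow> ('n + 'n \<Rightarrow> real) \<Rightarrow> 'n + 'n" where
  "fired_event lam mu x c = (SOME e. e \<in> active_events lam mu x \<and> c e / ev_rate lam mu x e = hold_time lam mu x c)"

definition apply_event :: "('n \<Rightarrow> nat) \<Rightarrow> 'n + 'n \<Rightarrow> ('n \<Rightarrow> nat)" where
  "apply_event x e = (case e of Inl i \<Rightarrow> x(i := x i + 1) | Inr i \<Rightarrow> x(i := x i - 1))"

fun jump_chain :: "('n::finite \<Rightarrow> real) \<Rightarrow> ('n \<Rightarrow> ('n \<Rightarrow> nat) \<Rightarrow> real) \<Rightarrow> ('n \<Rightarrow> nat)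
    \<Rightarrow> (nat \<Rightarrow> 'n + 'n \<Rightarrow> 'a \<Rightarrow> real) \<Rightarrow> nat \<Rightarrow> 'a \<Rightarrow> ('n \<Rightarrow> nat)" where
  "jump_chain lam mu x0 E 0 \<omega> = x0"
| "jump_chain lam mu x0 E (Suc k) \<omega> =
     (let x = jump_chain lam mu x0 E k \<omega> in apply_event x (fired_event lam mu x (\<lambda>e. E k e \<omega>)))"

fun jump_time :: "('n::finite \<Rightarrow> real) \<Rightarrow> ('n \<Rightarrow> ('n \<Rightarrow> nat) \<Rightarrow> real) \<Rightarrow> ('n \<Rightarrow> nat)
    \<Rightarrow> (nat \<Rightarrow> 'n + 'n \<Rightarrow> 'a \<Rightarrow> real) \<Rightarrow> nat \<Rightarrow> 'a \<Rightarrow> real" where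
  "jump_time lam mu x0 E 0 \<omega> = 0"
| "jump_time lam mu x0 E (Suc k) \<omega> =
     jump_time lam mu x0 E k \<omega> + hold_time lam mu (jump_chain lam mu x0 E k \<omega>) (\<lambda>e. E k e \<omega>)"

text \<open>Queue-length process: X(t) = Y k for T k \<le> t < T (k+1).\<close>
definition queue_process :: "('n::finite \<Rightarrow> real) \<Rightarrow> ('n \<Rightarrow> ('n \<Rightarrow> nat) \<Rightarrow> real) \<Rightarrow> ('n \<Rightarrow> nat)
    \<Rightarrow> (nat \<Rightarrow> 'n + 'n \<Rightarrow> 'a \<Rightarrow> real) \<Rightarrow> real \<Rightarrow> 'a \<Rightarrow> ('n \<Rightarrow> nat)" where
  "queue_process lam mu x0 E t \<omega> =
     jump_chain lam mu x0 E (LEAST k. t < jump_time lam mu x0 E (Suc k) \<omega>) \<omega>"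

end

theory Submission
  imports Defs
begin

lemma (in prob_space) indep_fact:
  assumes ind: "indep_var S X T Y"
    and f[measurable]: "f \<in> borel_measurable (S \<Otimes>\<^sub>M T)"
  shows "(\<integral>\<^sup>+\<omega>. f (X \<omega>, Y \<omega>) \<partial>M) = (\<integral>\<^sup>+\<omega>. (\<integral>\<^sup>+\<omega>'. f (X \<omega>, Y \<omega>') \<partial>M) \<partial>M)"
proof -
  have rv: "random_variable S X" "random_variable T Y"
    using ind by (auto dest: indep_var_rv1 indep_var_rv2)
  note [measurable] = rv
  have eq: "distr M S X \<Otimes>\<^sub>M distr M T Y = distr M (S \<Otimes>\<^sub>M T) (\<lambda>x. (X x, Y x))"
    using ind by (simp add: indep_var_distribution_eq)
  interpret PX: prob_space "distr M S X" by (rule prob_space_distr) fact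
  interpret PY: prob_space "distr M T Y" by (rule prob_space_distr) fact
  interpret PXY: pair_prob_space "distr M S X" "distr M T Y" ..
  have "(\<integral>\<^sup>+\<omega>. f (X \<omega>, Y \<omega>) \<partial>M) = integral\<^sup>N (distr M (S \<Otimes>\<^sub>M T) (\<lambda>x. (X x, Y x))) f"
    by (subst nn_integral_distr) auto
  also have "\<dots> = integral\<^sup>N (distr M S X \<Otimes>\<^sub>M distr M T Y) f" by (simp add: eq)
  also have "\<dots> = (\<integral>\<^sup>+ x. \<integral>\<^sup>+ y. f (x, y) \<partial>distr M T Y \<partial>distr M S X)"
    by (subst PY.nn_integral_fst[symmetric]) auto
  also have "\<dots> = (\<integral>\<^sup>+ x. \<integral>\<^sup>+ \<omega>'. f (x, Y \<omega>') \<partial>M \<partial>distr M S X)"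
    by (intro nn_integral_cong, subst nn_integral_distr) auto
  also have "\<dots> = (\<integral>\<^sup>+\<omega>. (\<integral>\<^sup>+\<omega>'. f (X \<omega>, Y \<omega>') \<partial>M) \<partial>M)"
  proof (subst nn_integral_distr)
    show "(\<lambda>x. \<integral>\<^sup>+ \<omega>'. f (x, Y \<omega>') \<partial>M) \<in> borel_measurable (distr M S X)"
      using PY.borel_measurable_nn_integral_fst[of f S]
      by (subst measurable_cong[where g="\<lambda>x. \<integral>\<^sup>+ y. f (x, y) \<partial>distr M T Y"])
         (auto simp: nn_integral_distr)
  qed auto
  finally show ?thesis .
qed

lemma nn_integral_exp_neg:
  assumes "0 < a"
  shows "(\<integral>\<^sup>+x. ennreal (exp (- x * a)) * indicator {0..} x \<partial>lborel) = ennreal (1 / a)"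
proof -
  have "(\<integral>\<^sup>+x. ennreal (exponential_density a x) \<partial>lborel) = 1"
    using prob_space.emeasure_space_1[OF prob_space_exponential_density[OF assms]]
    by (simp add: emeasure_density)
  moreover have "(\<integral>\<^sup>+x. ennreal (exponential_density a x) \<partial>lborel) =
      ennreal a * (\<integral>\<^sup>+x. ennreal (exp (- x * a)) * indicator {0..} x \<partial>lborel)"
    using assms
    by (subst nn_integral_cmult[symmetric])
       (auto intro!: nn_integral_cong simp: exponential_density_def ennreal_mult' split: split_indicator)
  ultimately have 1: "ennreal a * (\<integral>\<^sup>+x. ennreal (exp (- x * a)) * indicator {0..} x \<partial>lborel) = 1"
    by simp
  have 2: "ennreal (1/a) * ennreal a = 1"
    using assms by (subst ennreal_mult[symmetric]) auto
  have "(\<integral>\<^sup>+x. ennreal (exp (- x * a)) * indicator {0..} x \<partial>lborel) =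
     ennreal (1/a) * (ennreal a * (\<integral>\<^sup>+x. ennreal (exp (- x * a)) * indicator {0..} x \<partial>lborel))"
    by (simp only: mult.assoc[symmetric] 2 mult_1)
  then show ?thesis by (simp only: 1 mult_1_right)
qed

lemma (in prob_space) exp_pos_AE:
  assumes D: "distributed M lborel X (exponential_density l)" and l: "0 < l"
  shows "AE \<omega> in M. 0 < X \<omega>"
proof (rule AE_I[where N="{\<omega>\<in>space M. X \<omega> \<le> 0}"])
  have [measurable]: "random_variable borel X"
    using D l by (simp add: exponential_distributed_iff)
  show "{\<omega>\<in>space M. \<not> 0 < X \<omega>} \<subseteq> {\<omega>\<in>space M. X \<omega> \<le> 0}" by auto
  have "prob {\<omega>\<in>space M. X \<omega> \<le> 0} = 0"
    using exponential_distributedD_le[OF D _ l, of 0] by simp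
  then show "emeasure M {\<omega>\<in>space M. X \<omega> \<le> 0} = 0"
    by (simp add: emeasure_eq_measure)
  show "{\<omega>\<in>space M. X \<omega> \<le> 0} \<in> events" by measurable
qed

lemma (in prob_space) exp_race:
  assumes l: "0 < l" and u: "0 < u"
    and DX: "distributed M lborel X (exponential_density l)"
    and DY: "distributed M lborel Y (exponential_density u)"
    and ind: "indep_var borel X borel Y"
  shows "emeasure M {\<omega>\<in>space M. X \<omega> < Y \<omega>} = ennreal (l / (l + u))"
proof -
  have [measurable]: "random_variable borel X" "random_variable borel Y"
    using DX DY l u by (simp_all add: exponential_distributed_iff)
  define g where "g x = (if 0 \<le> x then ennreal (exp (- x * u)) else 1)" for x :: real
  have gm[measurable]: "g \<in> borel_measurable borel" unfolding g_def by measurable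
  have "emeasure M {\<omega>\<in>space M. X \<omega> < Y \<omega>} = (\<integral>\<^sup>+\<omega>. indicator {p::real\<times>real. fst p < snd p} (X \<omega>, Y \<omega>) \<partial>M)"
  proof -
    have "(\<integral>\<^sup>+\<omega>. indicator {p::real\<times>real. fst p < snd p} (X \<omega>, Y \<omega>) \<partial>M) = (\<integral>\<^sup>+\<omega>. indicator {\<omega>\<in>space M. X \<omega> < Y \<omega>} \<omega> \<partial>M)"
      by (rule nn_integral_cong) (simp split: split_indicator)
    also have "\<dots> = emeasure M {\<omega>\<in>space M. X \<omega> < Y \<omega>}"
      by (rule nn_integral_indicator) measurable
    finally show ?thesis by (rule sym)
  qed
  also have "\<dots> = (\<integral>\<^sup>+\<omega>. (\<integral>\<^sup>+\<omega>'. indicator {p::real\<times>real. fst p < snd p} (X \<omega>, Y \<omega>') \<partial>M) \<partial>M)"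
    by (rule indep_fact[OF ind]) measurable
  also have "\<dots> = (\<integral>\<^sup>+\<omega>. g (X \<omega>) \<partial>M)"
  proof (rule nn_integral_cong_AE)
    show "AE \<omega> in M. (\<integral>\<^sup>+\<omega>'. indicator {p::real\<times>real. fst p < snd p} (X \<omega>, Y \<omega>') \<partial>M) = g (X \<omega>)"
      using exp_pos_AE[OF DX l]
    proof eventually_elim
      case (elim \<omega>)
      have "(\<integral>\<^sup>+\<omega>'. indicator {p::real\<times>real. fst p < snd p} (X \<omega>, Y \<omega>') \<partial>M)
          = emeasure M {\<omega>'\<in>space M. X \<omega> < Y \<omega>'}"
      proof -
        have "(\<integral>\<^sup>+\<omega>'. indicator {p::real\<times>real. fst p < snd p} (X \<omega>, Y \<omega>') \<partial>M)
          = (\<integral>\<^sup>+\<omega>'. indicator {\<omega>'\<in>space M. X \<omega> < Y \<omega>'} \<omega>' \<partial>M)"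
          by (rule nn_integral_cong) (simp split: split_indicator)
        also have "\<dots> = emeasure M {\<omega>'\<in>space M. X \<omega> < Y \<omega>'}"
          by (rule nn_integral_indicator) measurable
        finally show ?thesis .
      qed
      also have "\<dots> = ennreal (exp (- X \<omega> * u))"
        using exponential_distributedD_gt[OF DY _ u, of "X \<omega>"] elim
        by (simp add: emeasure_eq_measure)
      finally show ?case using elim by (simp add: g_def)
    qed
  qed
  also have "\<dots> = (\<integral>\<^sup>+x. ennreal (exponential_density l x) * g x \<partial>lborel)"
    by (rule distributed_nn_integral[OF DX, symmetric]) simp
  also have "\<dots> = (\<integral>\<^sup>+x. ennreal l * (ennreal (exp (- x * (l + u))) * indicator {0..} x) \<partial>lborel)"
    using l u
    by (intro nn_integral_cong)
       (auto simp: exponential_density_def g_def ennreal_mult'[symmetric] exp_add[symmetric] algebra_simps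
          split: split_indicator)
  also have "\<dots> = ennreal l * ennreal (1 / (l + u))"
    using l u nn_integral_exp_neg[of "l+u"] by (subst nn_integral_cmult) auto
  also have "\<dots> = ennreal (l / (l + u))"
    using l u by (simp add: ennreal_mult[symmetric])
  finally show ?thesis .
qed

locale qbase =
  fixes lam :: "'n::finite \<Rightarrow> real" and mu :: "'n \<Rightarrow> ('n \<Rightarrow> nat) \<Rightarrow> real"
  assumes lam_pos: "\<And>i. 0 < lam i" and mu_nonneg: "\<And>i x. 0 \<le> mu i x"
begin

abbreviation "rt \<equiv> ev_rate lam mu"
abbreviation "act \<equiv> active_events lam mu"
abbreviation "hld \<equiv> hold_time lam mu"
abbreviation "fr \<equiv> fired_event lam mu"

lemma rt_nonneg: "0 \<le> rt x e"
  using lam_pos[THEN less_imp_le] mu_nonneg by (auto simp: ev_rate_def split: sum.split)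

lemma Inl_act: "Inl i \<in> act x"
  using lam_pos by (simp add: active_events_def ev_rate_def)

lemma act_ne: "act x \<noteq> {}"
  using Inl_act by blast

lemma act_pos: "e \<in> act x \<Longrightarrow> 0 < rt x e"
  by (simp add: active_events_def)

lemma fin_act: "finite (act x)" by simp

lemma hld_attained: "\<exists>e\<in>act x. c e / rt x e = hld x c"
proof -
  have "hld x c \<in> (\<lambda>e. c e / rt x e) ` act x"
    unfolding hold_time_def by (rule Min_in) (auto simp: act_ne)
  then show ?thesis by force
qed

lemma fr_act: "fr x c \<in> act x \<and> c (fr x c) / rt x (fr x c) = hld x c"
  unfolding fired_event_def by (rule someI_ex) (use hld_attained in blast)

lemma hld_le: "e \<in> act x \<Longrightarrow> hld x c \<le> c e / rt x e"
  unfolding hold_time_def by (rule Min_le) auto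

lemma fr_strict:
  assumes a: "a \<in> act x" and s: "\<And>f. f \<in> act x - {a} \<Longrightarrow> c a / rt x a < c f / rt x f"
  shows "fr x c = a"
proof (rule ccontr)
  assume ne: "fr x c \<noteq> a"
  have "hld x c \<le> c a / rt x a" by (rule hld_le[OF a])
  also have "\<dots> < c (fr x c) / rt x (fr x c)" using s[of "fr x c"] fr_act ne by blast
  also have "\<dots> = hld x c" using fr_act by blast
  finally show False by simp
qed

lemma hld_pos: "(\<And>e. 0 < c e) \<Longrightarrow> 0 < hld x c"
  using fr_act[of x c] act_pos[of "fr x c" x] by (metis divide_pos_pos)

definition nxt :: "('n \<Rightarrow> nat) \<Rightarrow> ('n + 'n \<Rightarrow> real) \<Rightarrow> ('n \<Rightarrow> nat)" where
  "nxt x c = apply_event x (fr x c)"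

abbreviation "CS \<equiv> (PiM UNIV (\<lambda>_::'n+'n. borel) :: ('n + 'n \<Rightarrow> real) measure)"

lemma pred_eq_real[measurable (raw)]:
  "f \<in> borel_measurable M \<Longrightarrow> g \<in> borel_measurable M \<Longrightarrow> Measurable.pred M (\<lambda>w. (f w::real) = g w)"
  unfolding pred_def by (rule borel_measurable_eq)

lemma hld_meas[measurable]: "(\<lambda>c. hld x c) \<in> borel_measurable CS"
  unfolding hold_time_def
  by (rule borel_measurable_Min) auto

lemma fr_meas[measurable]: "(\<lambda>c. fr x c) \<in> measurable CS (count_space UNIV)"
proof -
  define SS where "SS c = {e. e \<in> act x \<and> c e / rt x e = hld x c}" for c
  have eq: "fr x c = (\<lambda>S. Eps (\<lambda>e. e \<in> S)) (SS c)" for c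
    unfolding fired_event_def SS_def by simp
  have "SS \<in> measurable CS (count_space UNIV)"
  proof (subst measurable_count_space_eq2_countable, safe)
    fix S :: "('n+'n) set"
    have "SS -` {S} \<inter> space CS = {c\<in>space CS. \<forall>e\<in>UNIV. (e \<in> S) = (e \<in> act x \<and> c e / rt x e = hld x c)}"
      by (auto simp: SS_def)
    also have "\<dots> \<in> sets CS" by measurable
    finally show "SS -` {S} \<inter> space CS \<in> sets CS" .
  qed auto
  then show ?thesis
    unfolding eq by measurable
qed

lemma nxt_meas[measurable]: "(\<lambda>c. nxt x c) \<in> measurable CS (count_space UNIV)"
proof -
  have "(\<lambda>c. apply_event x (fr x c)) \<in> measurable CS (count_space UNIV)"
    by (rule measurable_compose[OF fr_meas]) simp
  then show ?thesis by (simp add: nxt_def)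
qed

end

context qbase begin

fun JC :: "('n \<Rightarrow> nat) \<Rightarrow> nat \<Rightarrow> (nat \<Rightarrow> 'n + 'n \<Rightarrow> real) \<Rightarrow> ('n \<Rightarrow> nat)" where
  "JC x0 0 v = x0"
| "JC x0 (Suc k) v = nxt (JC x0 k v) (v k)"

fun JT :: "('n \<Rightarrow> nat) \<Rightarrow> nat \<Rightarrow> (nat \<Rightarrow> 'n + 'n \<Rightarrow> real) \<Rightarrow> real" where
  "JT x0 0 v = 0"
| "JT x0 (Suc k) v = JT x0 k v + hld (JC x0 k v) (v k)"

lemma jump_chain_JC: "jump_chain lam mu x0 E k \<omega> = JC x0 k (\<lambda>m e. E m e \<omega>)"
  by (induction k) (simp_all add: Let_def nxt_def)

lemma jump_time_JT: "jump_time lam mu x0 E k \<omega> = JT x0 k (\<lambda>m e. E m e \<omega>)"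
  by (induction k) (simp_all add: jump_chain_JC)

lemma JC_local: "(\<And>m. m < k \<Longrightarrow> v m = v' m) \<Longrightarrow> JC x0 k v = JC x0 k v'"
  by (induction k) auto

lemma JT_local: "(\<And>m. m < k \<Longrightarrow> v m = v' m) \<Longrightarrow> JT x0 k v = JT x0 k v'"
proof (induction k)
  case (Suc k)
  then show ?case using JC_local[of k v v'] by auto
qed simp

abbreviation "CA \<equiv> (PiM UNIV (\<lambda>_::nat. CS) :: (nat \<Rightarrow> 'n + 'n \<Rightarrow> real) measure)"

lemma JC_meas[measurable]: "JC x0 k \<in> measurable CA (count_space UNIV)"
proof (induction k)
  case 0
  then show ?case by simp
next
  case (Suc k)
  have "(\<lambda>v. (\<lambda>x v. nxt x (v k)) (JC x0 k v) v) \<in> measurable CA (count_space UNIV)"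
    by (rule measurable_compose_countable'[OF _ Suc]) auto
  then show ?case by simp
qed

lemma JT_meas[measurable]: "JT x0 k \<in> borel_measurable CA"
proof (induction k)
  case 0
  then show ?case by simp
next
  case (Suc k)
  have "(\<lambda>v. (\<lambda>x v. hld x (v k)) (JC x0 k v) v) \<in> borel_measurable CA"
    by (rule measurable_compose_countable'[OF _ JC_meas]) auto
  with Suc show ?case by simp
qed

end

locale qsys = qbase lam mu + prob_space M
  for lam :: "'n::finite \<Rightarrow> real" and mu and M :: "'a measure" +
  fixes E :: "nat \<Rightarrow> 'n + 'n \<Rightarrow> 'a \<Rightarrow> real"
  assumes indep: "indep_vars (\<lambda>_. borel) (\<lambda>(k, e). E k e) UNIV"
    and expd: "\<And>k e. distributed M lborel (E k e) (exponential_density 1)"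
begin

lemma meas_PiM_UNIV:
  assumes "\<And>i. (\<lambda>\<omega>. f \<omega> i) \<in> measurable N (K i)" and "\<And>i. space (K i) = UNIV"
  shows "f \<in> measurable N (PiM UNIV K)"
  apply (rule measurable_PiM_single')
   apply (rule assms(1))
  apply (auto simp: assms(2) PiE_def)
  done

lemma space_CS: "space CS = UNIV" by (simp add: space_PiM)

lemma E_meas[measurable]: "E k e \<in> borel_measurable M"
  using expd[of k e] by (simp add: exponential_distributed_iff)

lemma C_meas[measurable]: "(\<lambda>\<omega> e. E k e \<omega>) \<in> measurable M CS"
  by (rule meas_PiM_UNIV) auto

lemma indep_C: "indep_vars (\<lambda>_. CS) (\<lambda>m \<omega> e. E m e \<omega>) UNIV"
proof -
  have "indep_vars (\<lambda>m. PiM ({m} \<times> UNIV) (\<lambda>_. borel))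
      (\<lambda>m \<omega>. restrict (\<lambda>i. (\<lambda>(k, e). E k e) i \<omega>) ({m} \<times> UNIV)) UNIV"
    by (rule indep_vars_restrict[OF indep]) (auto simp: disjoint_family_on_def)
  then have "indep_vars (\<lambda>_. CS) (\<lambda>m \<omega>. (\<lambda>w e. w (m, e))
      (restrict (\<lambda>i. (\<lambda>(k, e). E k e) i \<omega>) ({m} \<times> UNIV))) UNIV"
    by (rule indep_vars_compose2) (rule meas_PiM_UNIV, auto)
  then show ?thesis by simp
qed

lemma indep_row: "indep_vars (\<lambda>_. borel) (\<lambda>e. E k e) UNIV"
proof -
  have I: "indep_sets (\<lambda>i. sigma_sets (space M) {(\<lambda>(k, e). E k e) i -` A \<inter> space M |A. A \<in> sets borel}) UNIV"
    using indep by (simp add: indep_vars_def)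
  have "indep_sets (\<lambda>e. sigma_sets (space M) {E k e -` A \<inter> space M |A. A \<in> sets borel}) UNIV"
  proof (rule indep_setsI)
    fix e :: "'n+'n"
    show "sigma_sets (space M) {E k e -` A \<inter> space M |A. A \<in> sets borel} \<subseteq> events"
      by (rule sets.sigma_sets_subset) (auto intro: measurable_sets[OF E_meas])
  next
    fix J :: "('n+'n) set" and A assume J: "J \<noteq> {}" "J \<subseteq> UNIV" "finite J"
      and A: "\<forall>j\<in>J. A j \<in> sigma_sets (space M) {E k j -` A \<inter> space M |A. A \<in> sets borel}"
    define J' where "J' = (\<lambda>e. (k, e)) ` J"
    define A' where "A' p = A (snd p)" for p :: "nat \<times> ('n+'n)"
    have "prob (\<Inter>j\<in>J'. A' j) = (\<Prod>j\<in>J'. prob (A' j))"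
      by (rule indep_setsD[OF I]) (use J A in \<open>auto simp: J'_def A'_def\<close>)
    moreover have "(\<Inter>j\<in>J'. A' j) = (\<Inter>j\<in>J. A j)" by (auto simp: J'_def A'_def)
    moreover have "(\<Prod>j\<in>J'. prob (A' j)) = (\<Prod>j\<in>J. prob (A j))"
      unfolding J'_def by (subst prod.reindex) (auto simp: inj_on_def A'_def)
    ultimately show "prob (\<Inter>j\<in>J. A j) = (\<Prod>j\<in>J. prob (A j))" by simp
  qed
  then show ?thesis by (simp add: indep_vars_def)
qed

lemma CA_meas[measurable]: "(\<lambda>\<omega> m e. E m e \<omega>) \<in> measurable M CA"
  by (rule meas_PiM_UNIV) (auto simp: space_CS)

definition YY :: "('n \<Rightarrow> nat) \<Rightarrow> nat \<Rightarrow> 'a \<Rightarrow> ('n \<Rightarrow> nat)" where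
  "YY x0 k \<omega> = JC x0 k (\<lambda>m e. E m e \<omega>)"
definition TT :: "('n \<Rightarrow> nat) \<Rightarrow> nat \<Rightarrow> 'a \<Rightarrow> real" where
  "TT x0 k \<omega> = JT x0 k (\<lambda>m e. E m e \<omega>)"

lemma YY_meas[measurable]: "YY x0 k \<in> measurable M (count_space UNIV)"
  unfolding YY_def by measurable
lemma TT_meas[measurable]: "TT x0 k \<in> borel_measurable M"
  unfolding TT_def by measurable

lemma YY_Suc: "YY x0 (Suc k) \<omega> = nxt (YY x0 k \<omega>) (\<lambda>e. E k e \<omega>)"
  by (simp add: YY_def)
lemma TT_Suc: "TT x0 (Suc k) \<omega> = TT x0 k \<omega> + hld (YY x0 k \<omega>) (\<lambda>e. E k e \<omega>)"
  by (simp add: YY_def TT_def)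

lemma fact_past:
  assumes F[measurable]: "F \<in> borel_measurable ((count_space UNIV \<Otimes>\<^sub>M borel) \<Otimes>\<^sub>M CS)"
  shows "(\<integral>\<^sup>+\<omega>. F ((YY x0 k \<omega>, TT x0 k \<omega>), (\<lambda>e. E k e \<omega>)) \<partial>M)
    = (\<integral>\<^sup>+\<omega>. (\<integral>\<^sup>+\<omega>'. F ((YY x0 k \<omega>, TT x0 k \<omega>), (\<lambda>e. E k e \<omega>')) \<partial>M) \<partial>M)"
proof -
  have I: "indep_var (PiM {..<k} (\<lambda>_. CS)) (\<lambda>\<omega>. restrict (\<lambda>m e. E m e \<omega>) {..<k})
      (PiM {k} (\<lambda>_. CS)) (\<lambda>\<omega>. restrict (\<lambda>m e. E m e \<omega>) {k})"
    by (rule indep_var_restrict[OF indep_C]) auto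
  define ext where "ext w = (\<lambda>m. if m < k then w m else (\<lambda>_::'n+'n. 0::real))" for w :: "nat \<Rightarrow> 'n+'n \<Rightarrow> real"
  have ext_meas[measurable]: "ext \<in> measurable (PiM {..<k} (\<lambda>_. CS)) CA"
    unfolding ext_def
    apply (rule meas_PiM_UNIV)
    subgoal for i by (cases "i < k") (auto intro!: measurable_const simp: space_CS)
    by (auto simp: space_CS)
  define G where "G p = F ((JC x0 k (ext (fst p)), JT x0 k (ext (fst p))), snd p k)" for p
  have Gm: "G \<in> borel_measurable (PiM {..<k} (\<lambda>_. CS) \<Otimes>\<^sub>M PiM {k} (\<lambda>_. CS))"
    unfolding G_def by measurable
  have e1: "JC x0 k (ext (restrict (\<lambda>m e. E m e \<omega>) {..<k})) = YY x0 k \<omega>" for \<omega>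
    unfolding YY_def by (auto simp: ext_def intro!: JC_local)
  have e2: "JT x0 k (ext (restrict (\<lambda>m e. E m e \<omega>) {..<k})) = TT x0 k \<omega>" for \<omega>
    unfolding TT_def by (auto simp: ext_def intro!: JT_local)
  from indep_fact[OF I Gm] show ?thesis
    by (simp add: G_def e1 e2)
qed

end

context qsys begin

definition Rt :: "('n \<Rightarrow> nat) \<Rightarrow> real" where
  "Rt x = (\<Sum>e\<in>act x. rt x e)"

lemma Rt_pos: "0 < Rt x"
  unfolding Rt_def by (rule sum_pos) (auto simp: act_pos act_ne)

lemma scaled_exp: "0 < r \<Longrightarrow> distributed M lborel (\<lambda>\<omega>. E k e \<omega> / r) (exponential_density r)"
  using erlang_distributed_mult_const[OF expd[of k e], of "1/r"] by (simp add: field_simps)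

lemma indep_scaled: "indep_vars (\<lambda>_. borel) (\<lambda>e \<omega>. E k e \<omega> / rt x e) UNIV"
  by (rule indep_vars_compose2[OF indep_row]) measurable

abbreviation "FR x k \<omega> \<equiv> fr x (\<lambda>e. E k e \<omega>)"

lemma FR_meas[measurable]: "(\<lambda>\<omega>. FR x k \<omega>) \<in> measurable M (count_space UNIV)"
  by measurable

lemma FR_sets[measurable]: "{\<omega>\<in>space M. FR x k \<omega> = a} \<in> sets M"
  by measurable

lemma FR_lower:
  assumes a: "a \<in> act x"
  shows "rt x a / Rt x \<le> prob {\<omega>\<in>space M. FR x k \<omega> = a}"
proof (cases "act x - {a} = {}")
  case True
  then have "act x = {a}" using a by auto
  then have "Rt x = rt x a" by (simp add: Rt_def)
  moreover have "{\<omega>\<in>space M. FR x k \<omega> = a} = space M"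
    using fr_act \<open>act x = {a}\<close> by blast
  ultimately show ?thesis using act_pos[OF a] by (simp add: prob_space)
next
  case False
  define I where "I = act x - {a}"
  define X where "X \<omega> = E k a \<omega> / rt x a" for \<omega>
  define Y where "Y \<omega> = Min ((\<lambda>f. E k f \<omega> / rt x f) ` I)" for \<omega>
  have finI: "finite I" by (simp add: I_def)
  have ra: "0 < rt x a" by (rule act_pos[OF a])
  have ind: "indep_vars (\<lambda>_. borel) (\<lambda>e \<omega>. E k e \<omega> / rt x e) (insert a I)"
    by (rule indep_vars_subset[OF indep_scaled]) simp
  have DX: "distributed M lborel X (exponential_density (rt x a))"
    unfolding X_def by (rule scaled_exp[OF ra])
  have DY: "distributed M lborel Y (exponential_density (\<Sum>f\<in>I. rt x f))"
    unfolding Y_def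
    by (rule exponential_distributed_Min[OF finI False[folded I_def]])
       (auto simp: I_def act_pos intro: scaled_exp indep_vars_subset[OF indep_scaled])
  have XY: "indep_var borel X borel Y"
    unfolding X_def Y_def
    by (rule indep_vars_Min[OF finI _ ind]) (simp add: I_def)
  have Spos: "0 < (\<Sum>f\<in>I. rt x f)"
    by (rule sum_pos[OF finI False[folded I_def]]) (auto simp: I_def act_pos)
  have RtI: "Rt x = rt x a + (\<Sum>f\<in>I. rt x f)"
    unfolding Rt_def I_def using a by (simp add: sum.remove)
  have "emeasure M {\<omega>\<in>space M. X \<omega> < Y \<omega>} = ennreal (rt x a / Rt x)"
    using exp_race[OF ra Spos DX DY XY] by (simp add: RtI)
  then have "prob {\<omega>\<in>space M. X \<omega> < Y \<omega>} = rt x a / Rt x"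
    using ra Rt_pos[of x] by (simp add: emeasure_eq_measure)
  moreover have "prob {\<omega>\<in>space M. X \<omega> < Y \<omega>} \<le> prob {\<omega>\<in>space M. FR x k \<omega> = a}"
  proof (rule finite_measure_mono)
    show "{\<omega>\<in>space M. FR x k \<omega> = a} \<in> events" by measurable
    show "{\<omega>\<in>space M. X \<omega> < Y \<omega>} \<subseteq> {\<omega>\<in>space M. FR x k \<omega> = a}"
    proof safe
      fix \<omega> assume \<omega>: "\<omega> \<in> space M" and lt: "X \<omega> < Y \<omega>"
      show "FR x k \<omega> = a"
      proof (rule fr_strict[OF a])
        fix f assume f: "f \<in> act x - {a}"
        have "Y \<omega> \<le> E k f \<omega> / rt x f"
          unfolding Y_def using f finI by (intro Min_le) (auto simp: I_def)
        with lt show "E k a \<omega> / rt x a < E k f \<omega> / rt x f" by (simp add: X_def)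
      qed
    qed
  qed
  ultimately show ?thesis by simp
qed

lemma FR_sum: "(\<Sum>e\<in>act x. prob {\<omega>\<in>space M. FR x k \<omega> = e}) = 1"
proof -
  have "(\<Sum>e\<in>act x. prob {\<omega>\<in>space M. FR x k \<omega> = e}) = prob (\<Union>e\<in>act x. {\<omega>\<in>space M. FR x k \<omega> = e})"
    by (rule finite_measure_finite_Union[symmetric]) (auto simp: disjoint_family_on_def)
  also have "(\<Union>e\<in>act x. {\<omega>\<in>space M. FR x k \<omega> = e}) = space M"
    using fr_act by blast
  finally show ?thesis by (simp add: prob_space)
qed

lemma FR_upper:
  assumes b: "b \<in> act x"
  shows "prob {\<omega>\<in>space M. FR x k \<omega> = b} \<le> rt x b / Rt x"
proof -
  have "prob {\<omega>\<in>space M. FR x k \<omega> = b} = 1 - (\<Sum>e\<in>act x - {b}. prob {\<omega>\<in>space M. FR x k \<omega> = e})"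
    using FR_sum[of x k] b by (simp add: sum.remove)
  also have "\<dots> \<le> 1 - (\<Sum>e\<in>act x - {b}. rt x e / Rt x)"
    using FR_lower by (intro diff_left_mono sum_mono) auto
  also have "\<dots> = (Rt x - (\<Sum>e\<in>act x - {b}. rt x e)) / Rt x"
    using Rt_pos[of x] by (simp add: sum_divide_distrib[symmetric] field_simps)
  also have "\<dots> = rt x b / Rt x"
    using b by (simp add: Rt_def sum.remove)
  finally show ?thesis .
qed

lemma FR_inactive: "b \<notin> act x \<Longrightarrow> prob {\<omega>\<in>space M. FR x k \<omega> = b} = 0"
  using fr_act by (metis (mono_tags, lifting) Collect_empty_eq measure_empty)

end

locale qdrift = qsys lam mu M E for lam :: "'n::finite \<Rightarrow> real" and mu M and E :: "nat \<Rightarrow> 'n + 'n \<Rightarrow> 'a \<Rightarrow> real" +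
  fixes j :: 'n and n0 :: nat and c B Rmax :: real
  assumes c_pos: "0 < c" and c_lt: "c < lam j" and c_le_B: "c \<le> B" and muB: "\<And>x. mu j x \<le> B"
    and mu_c: "\<And>x. n0 \<le> x j \<Longrightarrow> mu j x \<le> c"
    and Rmax: "\<And>x. (\<Sum>e\<in>active_events lam mu x. ev_rate lam mu x e) \<le> Rmax"
begin

definition q where "q = c / lam j"
definition Dl :: "nat \<Rightarrow> real" where "Dl z = (B / c) ^ min z n0 * q ^ z"
definition W where "W = (B / c) ^ n0 / (1 - q)"
definition phi :: "nat \<Rightarrow> real" where "phi y = W - (\<Sum>z\<in>{1..y}. Dl z)"

lemma q_pos: "0 < q" and q_lt1: "q < 1"
  using c_pos c_lt lam_pos[of j] by (auto simp: q_def)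

lemma Bc: "1 \<le> B / c" using c_pos c_le_B by simp

lemma Dl_pos: "0 < Dl z"
  unfolding Dl_def using q_pos Bc by simp

lemma Dl_le: "Dl z \<le> (B / c) ^ n0 * q ^ z"
  unfolding Dl_def using q_pos Bc
  by (intro mult_right_mono power_increasing) auto

lemma phi_nonneg: "0 \<le> phi y"
proof -
  have gs: "(\<Sum>z<Suc y. q ^ z) = (1 - q ^ Suc y) / (1 - q)"
  proof -
    have "(\<Sum>z<Suc y. q ^ z) = (q ^ Suc y - 1) / (q - 1)"
      by (rule geometric_sum) (use q_lt1 in simp)
    also have "\<dots> = (1 - q ^ Suc y) / (1 - q)"
      using q_lt1 by (simp add: field_simps)
    finally show ?thesis .
  qed
  have "(\<Sum>z\<in>{1..y}. Dl z) \<le> (\<Sum>z\<in>{1..y}. (B / c) ^ n0 * q ^ z)"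
    by (intro sum_mono Dl_le)
  also have "\<dots> \<le> (\<Sum>z<Suc y. (B / c) ^ n0 * q ^ z)"
    using q_pos Bc by (intro sum_mono2) auto
  also have "\<dots> = (B / c) ^ n0 * (\<Sum>z<Suc y. q ^ z)"
    by (simp only: sum_distrib_left)
  also have "\<dots> = (B / c) ^ n0 * ((1 - q ^ Suc y) / (1 - q))"
    by (simp only: gs)
  also have "\<dots> \<le> (B / c) ^ n0 * (1 / (1 - q))"
    using q_pos q_lt1 Bc by (intro mult_left_mono divide_right_mono) auto
  also have "\<dots> = W" by (simp add: W_def)
  finally show ?thesis by (simp add: phi_def)
qed

lemma phi_Suc: "phi (Suc y) = phi y - Dl (Suc y)"
  by (simp add: phi_def)

lemma Dl_step:
  assumes y: "1 \<le> y" and m: "m \<le> B" and mc: "n0 \<le> y \<Longrightarrow> m \<le> c" and m0: "0 \<le> m"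
  shows "m * Dl y \<le> lam j * Dl (Suc y)"
proof (cases "Suc y \<le> n0")
  case True
  then have "Dl (Suc y) = (B / c) * q * Dl y"
    by (simp add: Dl_def min_def)
  also have "(B / c) * q = B / lam j"
    using c_pos by (simp add: q_def)
  finally have "lam j * Dl (Suc y) = B * Dl y"
    using lam_pos[of j] by simp
  then show ?thesis using m Dl_pos[of y] by (simp add: mult_right_mono)
next
  case False
  then have "min y n0 = n0" "min (Suc y) n0 = n0" by auto
  then have "Dl (Suc y) = q * Dl y"
    by (simp add: Dl_def)
  then have "lam j * Dl (Suc y) = c * Dl y"
    using lam_pos[of j] by (simp add: q_def)
  moreover have "m \<le> c" using False by (intro mc) simp
  ultimately show ?thesis using Dl_pos[of y] by (simp add: mult_right_mono)
qed

end

context qsys begin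

lemma nn_int_FR:
  assumes h: "\<And>e. 0 \<le> h e"
  shows "(\<integral>\<^sup>+\<omega>. ennreal (h (FR x k \<omega>)) \<partial>M) = ennreal (\<Sum>e\<in>UNIV. h e * prob {\<omega>\<in>space M. FR x k \<omega> = e})"
proof -
  have "(\<integral>\<^sup>+\<omega>. ennreal (h (FR x k \<omega>)) \<partial>M) =
      (\<integral>\<^sup>+\<omega>. (\<Sum>e\<in>UNIV. ennreal (h e) * indicator {\<omega>\<in>space M. FR x k \<omega> = e} \<omega>) \<partial>M)"
  proof (rule nn_integral_cong)
    fix \<omega> assume "\<omega> \<in> space M"
    then have "(\<Sum>e\<in>UNIV. ennreal (h e) * indicator {\<omega>\<in>space M. FR x k \<omega> = e} \<omega>)
        = (\<Sum>e\<in>{FR x k \<omega>}. ennreal (h e) * indicator {\<omega>\<in>space M. FR x k \<omega> = e} \<omega>)"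
      by (intro sum.mono_neutral_right) (auto split: split_indicator)
    also have "\<dots> = ennreal (h (FR x k \<omega>))" using \<open>\<omega> \<in> space M\<close> by simp
    finally show "ennreal (h (FR x k \<omega>)) = (\<Sum>e\<in>UNIV. ennreal (h e) * indicator {\<omega>\<in>space M. FR x k \<omega> = e} \<omega>)" by simp
  qed
  also have "\<dots> = (\<Sum>e\<in>UNIV. ennreal (h e) * emeasure M {\<omega>\<in>space M. FR x k \<omega> = e})"
    by (subst nn_integral_sum) (auto simp: nn_integral_cmult_indicator)
  also have "\<dots> = (\<Sum>e\<in>UNIV. ennreal (h e * prob {\<omega>\<in>space M. FR x k \<omega> = e}))"
    using h by (intro sum.cong refl) (simp add: emeasure_eq_measure ennreal_mult)
  also have "\<dots> = ennreal (\<Sum>e\<in>UNIV. h e * prob {\<omega>\<in>space M. FR x k \<omega> = e})"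
    using h by (intro sum_ennreal) auto
  finally show ?thesis .
qed

end

context qdrift begin

definition c0 where "c0 = lam j / Rmax * Dl 1"

lemma Rmax_pos: "0 < Rmax"
  using Rt_pos[of undefined] Rmax[of undefined] by (simp add: Rt_def)

lemma c0_pos: "0 < c0"
  unfolding c0_def using lam_pos[of j] Rmax_pos Dl_pos[of 1] by simp

lemma apply_other: "e \<noteq> Inl j \<Longrightarrow> e \<noteq> Inr j \<Longrightarrow> apply_event x e j = x j"
  by (cases e) (auto simp: apply_event_def)

lemma drift_real:
  "(\<Sum>e\<in>UNIV. phi (apply_event x e j) * prob {\<omega>\<in>space M. FR x k \<omega> = e})
    + (if x j = 0 then c0 else 0) \<le> phi (x j)"
proof -
  define p where "p e = prob {\<omega>\<in>space M. FR x k \<omega> = e}" for e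
  define a where "a = (Inl j :: 'n + 'n)"
  define b where "b = (Inr j :: 'n + 'n)"
  define y where "y = x j"
  have ab: "a \<noteq> b" by (simp add: a_def b_def)
  have psum: "(\<Sum>e\<in>UNIV. p e) = 1"
  proof -
    have "(\<Sum>e\<in>UNIV. p e) = (\<Sum>e\<in>act x. p e)"
      by (rule sum.mono_neutral_right) (auto simp: p_def FR_inactive)
    then show ?thesis using FR_sum by (simp add: p_def)
  qed
  have split: "(\<Sum>e\<in>UNIV. f e) = f a + f b + (\<Sum>e\<in>UNIV - {a, b}. f e)" for f :: "'n + 'n \<Rightarrow> real"
  proof -
    have "(\<Sum>e\<in>UNIV. f e) = (\<Sum>e\<in>insert a (insert b (UNIV - {a, b})). f e)"
      by (rule sum.cong) auto
    also have "\<dots> = f a + f b + (\<Sum>e\<in>UNIV - {a, b}. f e)"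
      using ab by simp
    finally show ?thesis .
  qed
  have S: "(\<Sum>e\<in>UNIV. phi (apply_event x e j) * p e) =
      phi (Suc y) * p a + phi (apply_event x b j) * p b + phi y * (1 - p a - p b)"
  proof -
    have "(\<Sum>e\<in>UNIV - {a, b}. phi (apply_event x e j) * p e) = (\<Sum>e\<in>UNIV - {a, b}. phi y * p e)"
      by (intro sum.cong refl) (auto simp: apply_other a_def b_def y_def)
    also have "\<dots> = phi y * (1 - p a - p b)"
      using psum[unfolded split[of p]] by (simp add: sum_distrib_left[symmetric])
    finally show ?thesis
      by (subst split) (simp add: apply_event_def a_def y_def)
  qed
  have pa: "lam j / Rt x \<le> p a"
    using FR_lower[OF Inl_act, of x j k] by (simp add: p_def a_def ev_rate_def)
  have Rt_le: "Rt x \<le> Rmax" using Rmax[of x] by (simp add: Rt_def)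
  have pa_nonneg: "0 \<le> p a" "0 \<le> p b" by (simp_all add: p_def)
  show ?thesis
  proof (cases "y = 0")
    case True
    have "apply_event x b j = y" using True by (simp add: apply_event_def b_def y_def)
    then have "(\<Sum>e\<in>UNIV. phi (apply_event x e j) * p e) = phi y - Dl 1 * p a"
      using S True by (simp add: phi_Suc algebra_simps)
    moreover have "lam j / Rmax \<le> p a"
      using pa Rt_le Rt_pos[of x] lam_pos[of j]
      by (meson frac_le less_eq_real_def order.trans)
    then have "lam j / Rmax * Dl 1 \<le> p a * Dl 1"
      using Dl_pos[of 1] by (intro mult_right_mono) auto
    then have "c0 \<le> Dl 1 * p a" unfolding c0_def by (simp add: mult.commute)
    ultimately show ?thesis using True by (simp add: p_def y_def)
  next
    case False
    then obtain y' where y': "y = Suc y'" by (cases y) auto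
    have "apply_event x b j = y'" using y' by (simp add: apply_event_def b_def y_def)
    then have "(\<Sum>e\<in>UNIV. phi (apply_event x e j) * p e) = phi y - Dl (Suc y) * p a + Dl y * p b"
      using S y' by (simp add: phi_Suc algebra_simps)
    moreover have "Dl y * p b \<le> Dl (Suc y) * p a"
    proof (cases "b \<in> act x")
      case True
      have m: "rt x b = mu j x" using False by (simp add: ev_rate_def b_def y_def)
      have pb: "p b \<le> mu j x / Rt x" using FR_upper[OF True, of k] by (simp add: p_def m)
      have "Dl y * p b \<le> Dl y * (mu j x / Rt x)"
        using pb Dl_pos[of y] by (intro mult_left_mono) auto
      also have "\<dots> = (mu j x * Dl y) / Rt x" by simp
      also have "\<dots> \<le> (lam j * Dl (Suc y)) / Rt x"
        using Dl_step[of y "mu j x"] y' muB[of x] mu_c[of x] mu_nonneg[of j x] Rt_pos[of x]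
        by (intro divide_right_mono) (auto simp: y_def)
      also have "\<dots> = Dl (Suc y) * (lam j / Rt x)" by simp
      also have "\<dots> \<le> Dl (Suc y) * p a"
        using pa Dl_pos[of "Suc y"] by (intro mult_left_mono) auto
      finally show ?thesis .
    next
      case False
      then have "p b = 0" by (simp add: p_def FR_inactive)
      then show ?thesis using Dl_pos[of "Suc y"] pa_nonneg by simp
    qed
    ultimately show ?thesis using False by (simp add: p_def y_def)
  qed
qed

lemma drift_nn:
  "(\<integral>\<^sup>+\<omega>. ennreal (phi (nxt x (\<lambda>e. E k e \<omega>) j)) \<partial>M) + ennreal (if x j = 0 then c0 else 0)
    \<le> ennreal (phi (x j))"
proof -
  have "(\<integral>\<^sup>+\<omega>. ennreal (phi (nxt x (\<lambda>e. E k e \<omega>) j)) \<partial>M)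
      = ennreal (\<Sum>e\<in>UNIV. phi (apply_event x e j) * prob {\<omega>\<in>space M. FR x k \<omega> = e})"
    unfolding nxt_def
    by (rule nn_int_FR[where h="\<lambda>e. phi (apply_event x e j)"]) (rule phi_nonneg)
  also have "\<dots> + ennreal (if x j = 0 then c0 else 0)
      = ennreal ((\<Sum>e\<in>UNIV. phi (apply_event x e j) * prob {\<omega>\<in>space M. FR x k \<omega> = e})
         + (if x j = 0 then c0 else 0))"
    using c0_pos phi_nonneg
    by (intro ennreal_plus[symmetric]) (auto intro!: sum_nonneg)
  also have "\<dots> \<le> ennreal (phi (x j))"
    by (rule ennreal_leI[OF drift_real])
  finally show ?thesis .
qed

end

context qdrift begin

lemma YY_j_sets[measurable]: "{\<omega>\<in>space M. YY x0 n \<omega> j = 0} \<in> events"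
proof -
  have "{\<omega>\<in>space M. YY x0 n \<omega> j = 0} = YY x0 n -` {y. y j = 0} \<inter> space M" by auto
  also have "\<dots> \<in> events" by (rule measurable_sets[OF YY_meas]) simp
  finally show ?thesis .
qed

definition aa :: "('n \<Rightarrow> nat) \<Rightarrow> nat \<Rightarrow> ennreal" where
  "aa x0 n = (\<integral>\<^sup>+\<omega>. ennreal (phi (YY x0 n \<omega> j)) \<partial>M)"

lemma aa_step:
  "aa x0 (Suc n) + ennreal c0 * emeasure M {\<omega>\<in>space M. YY x0 n \<omega> j = 0} \<le> aa x0 n"
proof -
  define F where "F p = ennreal (phi (nxt (fst (fst p)) (snd p) j))" for p :: "(('n \<Rightarrow> nat) \<times> real) \<times> ('n + 'n \<Rightarrow> real)"
  define G where "G y = (\<integral>\<^sup>+\<omega>'. ennreal (phi (nxt y (\<lambda>e. E n e \<omega>') j)) \<partial>M)" for y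
  have Fm: "F \<in> borel_measurable ((count_space UNIV \<Otimes>\<^sub>M borel) \<Otimes>\<^sub>M CS)"
  proof -
    have "(\<lambda>p. (\<lambda>y p. ennreal (phi (nxt y (snd p) j))) (fst (fst p)) p)
        \<in> borel_measurable ((count_space UNIV \<Otimes>\<^sub>M borel) \<Otimes>\<^sub>M CS)"
    proof (rule measurable_compose_countable'[where f="\<lambda>y p. ennreal (phi (nxt y (snd p) j))" and g="\<lambda>p. fst (fst p)" and I=UNIV])
      show "(\<lambda>p. ennreal (phi (nxt y (snd p) j))) \<in> borel_measurable ((count_space UNIV \<Otimes>\<^sub>M borel) \<Otimes>\<^sub>M CS)"
        if "y \<in> UNIV" for y
      proof -
        have "(\<lambda>p. nxt y (snd p)) \<in> measurable ((count_space UNIV \<Otimes>\<^sub>M borel) \<Otimes>\<^sub>M CS) (count_space UNIV)"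
          by measurable
        then show ?thesis by (rule measurable_compose) simp
      qed
    qed measurable
    then show ?thesis by (simp add: F_def[abs_def])
  qed
  have "aa x0 (Suc n) = (\<integral>\<^sup>+\<omega>. F ((YY x0 n \<omega>, TT x0 n \<omega>), (\<lambda>e. E n e \<omega>)) \<partial>M)"
    by (simp add: aa_def F_def YY_Suc)
  also have "\<dots> = (\<integral>\<^sup>+\<omega>. G (YY x0 n \<omega>) \<partial>M)"
    by (subst fact_past[OF Fm]) (simp add: F_def G_def)
  finally have a1: "aa x0 (Suc n) = (\<integral>\<^sup>+\<omega>. G (YY x0 n \<omega>) \<partial>M)" .
  have Gm: "(\<lambda>\<omega>. G (YY x0 n \<omega>)) \<in> borel_measurable M"
    by (rule measurable_compose[OF YY_meas]) simp
  have a2: "ennreal c0 * emeasure M {\<omega>\<in>space M. YY x0 n \<omega> j = 0}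
      = (\<integral>\<^sup>+\<omega>. ennreal (if YY x0 n \<omega> j = 0 then c0 else 0) \<partial>M)"
    by (subst nn_integral_cmult_indicator[symmetric]) (auto intro!: nn_integral_cong split: split_indicator)
  have "aa x0 (Suc n) + ennreal c0 * emeasure M {\<omega>\<in>space M. YY x0 n \<omega> j = 0}
      = (\<integral>\<^sup>+\<omega>. G (YY x0 n \<omega>) + ennreal (if YY x0 n \<omega> j = 0 then c0 else 0) \<partial>M)"
    unfolding a1 a2 by (rule nn_integral_add[symmetric]) (use Gm in auto)
  also have "\<dots> \<le> aa x0 n"
    unfolding aa_def G_def by (intro nn_integral_mono drift_nn)
  finally show ?thesis .
qed

lemma aa_0: "aa x0 0 = ennreal (phi (x0 j))"
  by (simp add: aa_def YY_def emeasure_space_1)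

lemma aa_partial: "aa x0 n + ennreal (c0 * (\<Sum>k<n. prob {\<omega>\<in>space M. YY x0 k \<omega> j = 0})) \<le> ennreal (phi (x0 j))"
proof (induction n)
  case 0
  then show ?case by (simp add: aa_0)
next
  case (Suc n)
  have "aa x0 (Suc n) + ennreal (c0 * (\<Sum>k<Suc n. prob {\<omega>\<in>space M. YY x0 k \<omega> j = 0}))
      = (aa x0 (Suc n) + ennreal c0 * emeasure M {\<omega>\<in>space M. YY x0 n \<omega> j = 0})
        + ennreal (c0 * (\<Sum>k<n. prob {\<omega>\<in>space M. YY x0 k \<omega> j = 0}))"
    using c0_pos
    by (simp add: distrib_left ennreal_plus[symmetric] ennreal_mult emeasure_eq_measure sum_nonneg add.assoc
        add.commute add.left_commute)
  also have "\<dots> \<le> aa x0 n + ennreal (c0 * (\<Sum>k<n. prob {\<omega>\<in>space M. YY x0 k \<omega> j = 0}))"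
    by (intro add_right_mono aa_step)
  also have "\<dots> \<le> ennreal (phi (x0 j))" by (rule Suc.IH)
  finally show ?case .
qed

lemma eventually_pos_j: "AE \<omega> in M. eventually (\<lambda>n. YY x0 n \<omega> j \<noteq> 0) sequentially"
proof -
  have bound: "(\<Sum>k<n. prob {\<omega>\<in>space M. YY x0 k \<omega> j = 0}) \<le> phi (x0 j) / c0" for n
  proof -
    have "ennreal (c0 * (\<Sum>k<n. prob {\<omega>\<in>space M. YY x0 k \<omega> j = 0})) \<le> ennreal (phi (x0 j))"
      using aa_partial[of x0 n] by (meson add_increasing order_refl zero_le order_trans)
    then have "c0 * (\<Sum>k<n. prob {\<omega>\<in>space M. YY x0 k \<omega> j = 0}) \<le> phi (x0 j)"
      using phi_nonneg by (simp add: ennreal_le_iff)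
    then show ?thesis using c0_pos by (simp add: field_simps)
  qed
  have "summable (\<lambda>k. prob {\<omega>\<in>space M. YY x0 k \<omega> j = 0})"
    by (rule summableI_nonneg_bounded[OF _ bound]) simp
  then have "AE \<omega> in M. eventually (\<lambda>n. \<omega> \<in> space M - {\<omega>\<in>space M. YY x0 n \<omega> j = 0}) sequentially"
    by (intro borel_cantelli_AE1) (auto simp: less_top[symmetric])
  then show ?thesis
    by (rule AE_mp) (auto elim: eventually_mono)
qed

end

context qsys begin

lemma E_pos_AE: "AE \<omega> in M. \<forall>k e. 0 < E k e \<omega>"
  using exp_pos_AE[OF expd] by (simp add: AE_all_countable)

definition pG where "pG = prob {\<omega>\<in>space M. \<forall>e. 1 < E 0 e \<omega>}"

lemma pG_eq: "prob {\<omega>\<in>space M. \<forall>e. 1 < E k e \<omega>} = exp (-1) ^ CARD('n + 'n)"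
proof -
  have "{\<omega>\<in>space M. \<forall>e. 1 < E k e \<omega>} = (\<Inter>e\<in>UNIV. E k e -` {1<..} \<inter> space M)" by auto
  then have "prob {\<omega>\<in>space M. \<forall>e. 1 < E k e \<omega>} = (\<Prod>e\<in>UNIV. prob (E k e -` {1<..} \<inter> space M))"
    using indep_varsD[OF indep_row, of UNIV "\<lambda>_. {1<..}"] by simp
  also have "\<dots> = (\<Prod>e\<in>(UNIV::('n+'n) set). exp (-1))"
  proof (intro prod.cong refl)
    fix e
    have "prob (E k e -` {1<..} \<inter> space M) = \<P>(x in M. 1 < E k e x)"
      by (rule arg_cong[where f=prob]) auto
    also have "\<dots> = exp (- 1 * 1)" by (rule exponential_distributedD_gt[OF expd]) auto
    finally show "prob (E k e -` {1<..} \<inter> space M) = exp (-1)" by simp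
  qed
  finally show ?thesis by simp
qed

lemma inner_exp_bound:
  assumes Rm: "\<And>y e. rt y e \<le> Rm" and Rm_pos: "0 < Rm"
  shows "(\<integral>\<^sup>+\<omega>. ennreal (exp (- hld y (\<lambda>e. E k e \<omega>))) \<partial>M)
     \<le> ennreal (1 - (1 - exp (- 1 / Rm)) * exp (-1) ^ CARD('n + 'n))"
proof -
  define G where "G = {\<omega>\<in>space M. \<forall>e. 1 < E k e \<omega>}"
  have Gs[measurable]: "G \<in> events" unfolding G_def by measurable
  define d where "d = exp (- 1 / Rm)"
  have d: "0 \<le> d" "d \<le> 1" using Rm_pos by (auto simp: d_def)
  have "(\<integral>\<^sup>+\<omega>. ennreal (exp (- hld y (\<lambda>e. E k e \<omega>))) \<partial>M)
      \<le> (\<integral>\<^sup>+\<omega>. ennreal d * indicator G \<omega> + indicator (space M - G) \<omega> \<partial>M)"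
  proof (rule nn_integral_mono_AE)
    show "AE \<omega> in M. ennreal (exp (- hld y (\<lambda>e. E k e \<omega>))) \<le> ennreal d * indicator G \<omega> + indicator (space M - G) \<omega>"
      using E_pos_AE AE_space
    proof eventually_elim
      case (elim \<omega>)
      have hp: "0 < hld y (\<lambda>e. E k e \<omega>)" by (rule hld_pos) (use elim in auto)
      show ?case
      proof (cases "\<omega> \<in> G")
        case True
        let ?f = "fr y (\<lambda>e. E k e \<omega>)"
        have r: "0 < rt y ?f" "rt y ?f \<le> Rm" using fr_act act_pos Rm by auto
        have "1 / Rm \<le> 1 / rt y ?f" using r by (intro divide_left_mono) auto
        also have "\<dots> < E k ?f \<omega> / rt y ?f" using True r by (intro divide_strict_right_mono) (auto simp: G_def)
        also have "\<dots> = hld y (\<lambda>e. E k e \<omega>)" using fr_act[of y "\<lambda>e. E k e \<omega>"] by simp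
        finally have "exp (- hld y (\<lambda>e. E k e \<omega>)) \<le> d" by (simp add: d_def)
        then show ?thesis using True by (simp add: ennreal_leI)
      next
        case False
        then show ?thesis using elim hp by simp
      qed
    qed
  qed
  also have "\<dots> = ennreal d * emeasure M G + emeasure M (space M - G)"
    by (subst nn_integral_add) (auto simp: nn_integral_cmult_indicator)
  also have "\<dots> = ennreal (d * prob G + (1 - prob G))"
    using d by (simp add: emeasure_eq_measure prob_compl ennreal_mult ennreal_plus)
  also have "d * prob G + (1 - prob G) = 1 - (1 - d) * exp (-1) ^ CARD('n + 'n)"
    using pG_eq[of k] by (simp add: G_def algebra_simps)
  finally show ?thesis by (simp add: d_def)
qed

end

context qsys begin

lemma TT_infty:
  assumes Rm: "\<And>y e. rt y e \<le> Rm" and Rm_pos: "0 < Rm"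
  shows "AE \<omega> in M. \<forall>m::nat. eventually (\<lambda>n. real m < TT x0 n \<omega>) sequentially"
proof -
  define \<rho> where "\<rho> = 1 - (1 - exp (- 1 / Rm)) * exp (-1) ^ CARD('n + 'n)"
  have \<rho>: "0 \<le> \<rho>" "\<rho> < 1"
  proof -
    have a: "0 < 1 - exp (- 1 / Rm)" "1 - exp (- 1 / Rm) \<le> 1" using Rm_pos by auto
    have b: "0 < exp (-1::real) ^ CARD('n + 'n)" "exp (-1::real) ^ CARD('n + 'n) \<le> 1"
      by (auto intro: power_le_one)
    have "(1 - exp (- 1 / Rm)) * exp (-1) ^ CARD('n + 'n) \<le> 1"
      using a b by (simp add: mult_le_one)
    moreover have "0 < (1 - exp (- 1 / Rm)) * exp (-1) ^ CARD('n + 'n)"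
      using a b by simp
    ultimately show "0 \<le> \<rho>" "\<rho> < 1" by (auto simp: \<rho>_def)
  qed
  define bb where "bb n = (\<integral>\<^sup>+\<omega>. ennreal (exp (- TT x0 n \<omega>)) \<partial>M)" for n
  have step: "bb (Suc n) \<le> ennreal \<rho> * bb n" for n
  proof -
    define F where "F p = ennreal (exp (- snd (fst p))) * ennreal (exp (- hld (fst (fst p)) (snd p)))"
      for p :: "(('n \<Rightarrow> nat) \<times> real) \<times> ('n + 'n \<Rightarrow> real)"
    have Fm: "F \<in> borel_measurable ((count_space UNIV \<Otimes>\<^sub>M borel) \<Otimes>\<^sub>M CS)"
    proof -
      have "(\<lambda>p. (\<lambda>y p. ennreal (exp (- snd (fst p))) * ennreal (exp (- hld y (snd p)))) (fst (fst p)) p)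
          \<in> borel_measurable ((count_space UNIV \<Otimes>\<^sub>M borel) \<Otimes>\<^sub>M CS)"
        by (rule measurable_compose_countable'[where f="\<lambda>y p. ennreal (exp (- snd (fst p))) * ennreal (exp (- hld y (snd p)))"
              and g="\<lambda>p. fst (fst p)" and I=UNIV]) measurable
      then show ?thesis by (simp add: F_def[abs_def])
    qed
    have "bb (Suc n) = (\<integral>\<^sup>+\<omega>. F ((YY x0 n \<omega>, TT x0 n \<omega>), (\<lambda>e. E n e \<omega>)) \<partial>M)"
      unfolding bb_def F_def
      by (intro nn_integral_cong) (simp add: TT_Suc exp_add[symmetric] ennreal_mult[symmetric])
    also have "\<dots> = (\<integral>\<^sup>+\<omega>. (\<integral>\<^sup>+\<omega>'. F ((YY x0 n \<omega>, TT x0 n \<omega>), (\<lambda>e. E n e \<omega>')) \<partial>M) \<partial>M)"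
      by (rule fact_past[OF Fm])
    also have "\<dots> = (\<integral>\<^sup>+\<omega>. ennreal (exp (- TT x0 n \<omega>)) *
        (\<integral>\<^sup>+\<omega>'. ennreal (exp (- hld (YY x0 n \<omega>) (\<lambda>e. E n e \<omega>'))) \<partial>M) \<partial>M)"
      unfolding F_def by (intro nn_integral_cong) (simp add: nn_integral_cmult)
    also have "\<dots> \<le> (\<integral>\<^sup>+\<omega>. ennreal (exp (- TT x0 n \<omega>)) * ennreal \<rho> \<partial>M)"
      unfolding \<rho>_def
      by (intro nn_integral_mono mult_left_mono inner_exp_bound[OF Rm Rm_pos]) auto
    also have "\<dots> = ennreal \<rho> * bb n"
      unfolding bb_def by (subst nn_integral_multc) (auto simp: mult.commute)
    finally show ?thesis .
  qed
  have bbn: "bb n \<le> ennreal (\<rho> ^ n)" for n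
  proof (induction n)
    case 0
    then show ?case by (simp add: bb_def TT_def emeasure_space_1)
  next
    case (Suc n)
    have "bb (Suc n) \<le> ennreal \<rho> * bb n" by (rule step)
    also have "\<dots> \<le> ennreal \<rho> * ennreal (\<rho> ^ n)" by (intro mult_left_mono Suc.IH) auto
    also have "\<dots> = ennreal (\<rho> ^ Suc n)" using \<rho> by (simp add: ennreal_mult[symmetric])
    finally show ?case .
  qed
  have single: "AE \<omega> in M. eventually (\<lambda>n. real m < TT x0 n \<omega>) sequentially" for m :: nat
  proof -
    define t where "t = real m"
    have [measurable]: "{\<omega>\<in>space M. TT x0 n \<omega> \<le> t} \<in> events" for n by measurable
    have pb: "prob {\<omega>\<in>space M. TT x0 n \<omega> \<le> t} \<le> exp t * \<rho> ^ n" for n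
    proof -
      have "emeasure M {\<omega>\<in>space M. TT x0 n \<omega> \<le> t} = (\<integral>\<^sup>+\<omega>. indicator {\<omega>\<in>space M. TT x0 n \<omega> \<le> t} \<omega> \<partial>M)"
        by simp
      also have "\<dots> \<le> (\<integral>\<^sup>+\<omega>. ennreal (exp t) * ennreal (exp (- TT x0 n \<omega>)) \<partial>M)"
        by (intro nn_integral_mono) (auto simp: ennreal_mult[symmetric] exp_add[symmetric] split: split_indicator)
      also have "\<dots> = ennreal (exp t) * bb n"
        unfolding bb_def by (subst nn_integral_cmult) auto
      also have "\<dots> \<le> ennreal (exp t) * ennreal (\<rho> ^ n)" by (intro mult_left_mono bbn) auto
      also have "\<dots> = ennreal (exp t * \<rho> ^ n)" using \<rho> by (simp add: ennreal_mult[symmetric])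
      finally show ?thesis using \<rho> by (simp add: emeasure_eq_measure ennreal_le_iff)
    qed
    have "summable (\<lambda>n. exp t * \<rho> ^ n)"
      using \<rho> by (intro summable_mult summable_geometric) auto
    then have "summable (\<lambda>n. prob {\<omega>\<in>space M. TT x0 n \<omega> \<le> t})"
      by (rule summable_comparison_test'[where N=0]) (use pb in auto)
    then have "AE \<omega> in M. eventually (\<lambda>n. \<omega> \<in> space M - {\<omega>\<in>space M. TT x0 n \<omega> \<le> t}) sequentially"
      by (intro borel_cantelli_AE1) (auto simp: less_top[symmetric])
    then show ?thesis
      by eventually_elim (auto simp: t_def not_le elim: eventually_mono)
  qed
  then show ?thesis by (simp add: AE_all_countable)
qed

end

lemma overload_j:
  fixes lam :: "'n::finite \<Rightarrow> real" and mu :: "'n \<Rightarrow> ('n \<Rightarrow> nat) \<Rightarrow> real"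
  assumes lam_pos: "\<And>i. 0 < lam i"
    and homog_lam: "\<And>i j. lam i = lam j"
    and homog_mu: "\<And>\<pi> i x. bij \<pi> \<Longrightarrow> mu (\<pi> i) (x \<circ> inv \<pi>) = mu i x"
    and overload: "\<exists>i. ereal (lam i) > limsup (\<lambda>n::nat. SUP x \<in> {x. x i = n}. ereal (mu i x))"
  shows "\<exists>n0 c. 0 < c \<and> c < lam j \<and> (\<forall>x. n0 \<le> x j \<longrightarrow> mu j x \<le> c)"
proof -
  obtain i where ov: "ereal (lam i) > limsup (\<lambda>n::nat. SUP x \<in> {x. x i = n}. ereal (mu i x))"
    using overload by blast
  obtain c' where c': "limsup (\<lambda>n::nat. SUP x \<in> {x. x i = n}. ereal (mu i x)) < ereal c'" "ereal c' < ereal (lam i)"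
    using ereal_dense2[OF ov] by blast
  have "eventually (\<lambda>n. (SUP x \<in> {x. x i = n}. ereal (mu i x)) < ereal c') sequentially"
    by (rule Limsup_lessD[OF c'(1)])
  then obtain n0 where n0: "\<And>n. n0 \<le> n \<Longrightarrow> (SUP x \<in> {x. x i = n}. ereal (mu i x)) < ereal c'"
    by (auto simp: eventually_sequentially)
  define c where "c = max c' (lam i / 2)"
  have c: "0 < c" "c < lam i" using lam_pos[of i] c'(2) by (auto simp: c_def)
  have bi: "n0 \<le> x i \<Longrightarrow> mu i x \<le> c" for x
  proof -
    assume "n0 \<le> x i"
    have "ereal (mu i x) \<le> (SUP x' \<in> {x'. x' i = x i}. ereal (mu i x'))" by (rule SUP_upper) simp
    also have "\<dots> < ereal c'" using n0[OF \<open>n0 \<le> x i\<close>] .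
    finally show ?thesis by (simp add: c_def)
  qed
  define \<pi> where "\<pi> k = (if k = i then j else if k = j then i else k)" for k
  have pp: "\<pi> (\<pi> k) = k" for k by (simp add: \<pi>_def)
  have bij: "bij \<pi>" by (rule o_bij[of \<pi>]) (auto simp: pp fun_eq_iff)
  have invp: "inv \<pi> = \<pi>" by (rule inv_unique_comp) (auto simp: pp fun_eq_iff)
  have "\<forall>x. n0 \<le> x j \<longrightarrow> mu j x \<le> c"
  proof safe
    fix x :: "'n \<Rightarrow> nat" assume "n0 \<le> x j"
    have "mu (\<pi> i) ((x \<circ> \<pi>) \<circ> inv \<pi>) = mu i (x \<circ> \<pi>)" by (rule homog_mu[OF bij])
    moreover have "(x \<circ> \<pi>) \<circ> inv \<pi> = x" by (simp add: invp comp_def pp)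
    moreover have "\<pi> i = j" by (simp add: \<pi>_def)
    ultimately have "mu j x = mu i (x \<circ> \<pi>)" by simp
    also have "\<dots> \<le> c" using bi[of "x \<circ> \<pi>"] \<open>n0 \<le> x j\<close> by (simp add: \<pi>_def)
    finally show "mu j x \<le> c" .
  qed
  then show ?thesis using c homog_lam[of i j] by auto
qed

theorem theorem1:
  fixes M :: "'a measure"
    and lam :: "'n::finite \<Rightarrow> real"
    and mu :: "'n \<Rightarrow> ('n \<Rightarrow> nat) \<Rightarrow> real"
    and E :: "nat \<Rightarrow> 'n + 'n \<Rightarrow> 'a \<Rightarrow> real"
    and x0 :: "'n \<Rightarrow> nat"
  assumes "prob_space M"
    and "CARD('n) \<ge> 2"
    and lam_pos: "\<And>i. 0 < lam i"
    and mu_nonneg: "\<And>i x. 0 \<le> mu i x"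
    and mu_bounded: "\<exists>B. \<forall>i x. mu i x \<le> B"
    and homog_lam: "\<And>i j. lam i = lam j"
    and homog_mu: "\<And>\<pi> i x. bij \<pi> \<Longrightarrow> mu (\<pi> i) (x \<circ> inv \<pi>) = mu i x"
    and clocks_indep: "prob_space.indep_vars M (\<lambda>_. borel) (\<lambda>(k, e). E k e) UNIV"
    and clocks_exp: "\<And>k e. distributed M lborel (E k e) (exponential_density 1)"
    and overload: "\<exists>i. ereal (lam i) >
          limsup (\<lambda>n::nat. SUP x \<in> {x. x i = n}. ereal (mu i x))"
  shows "AE \<omega> in M. eventually (\<lambda>t. \<forall>i. 0 < queue_process lam mu x0 E t \<omega> i) at_top"
proof -
  have Q: "qsys lam mu M E"
  proof (rule qsys.intro)
    show "qbase lam mu" by (rule qbase.intro) (use lam_pos mu_nonneg in auto)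
    show "prob_space M" by fact
    show "qsys_axioms M E" by (rule qsys_axioms.intro) (use clocks_indep clocks_exp in auto)
  qed
  interpret qsys lam mu M E by (rule Q)
  obtain B0 where B0: "\<And>i x. mu i x \<le> B0" using mu_bounded by blast
  define i0 :: 'n where "i0 = undefined"
  define Rm where "Rm = lam i0 + max B0 0 + 1"
  have Rm_pos: "0 < Rm" using lam_pos[of i0] by (simp add: Rm_def)
  have Rm: "rt y e \<le> Rm" for y e
  proof (cases e)
    case (Inl i)
    then show ?thesis using lam_pos[of i0] homog_lam[of i i0] by (simp add: ev_rate_def Rm_def)
  next
    case (Inr i)
    then show ?thesis using lam_pos[of i0] B0[of i y] mu_nonneg[of i y] by (auto simp: ev_rate_def Rm_def)
  qed
  define Rmax where "Rmax = real CARD('n + 'n) * Rm"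
  have Rmax: "(\<Sum>e\<in>active_events lam mu x. ev_rate lam mu x e) \<le> Rmax" for x
  proof -
    have "(\<Sum>e\<in>act x. rt x e) \<le> (\<Sum>e\<in>(UNIV::('n+'n) set). rt x e)"
      by (rule sum_mono2) (auto simp: rt_nonneg)
    also have "\<dots> \<le> (\<Sum>e\<in>(UNIV::('n+'n) set). Rm)" by (intro sum_mono Rm)
    also have "\<dots> = Rmax" by (simp add: Rmax_def)
    finally show ?thesis .
  qed
  have pos_j: "AE \<omega> in M. eventually (\<lambda>n. YY x0 n \<omega> j \<noteq> 0) sequentially" for j
  proof -
    obtain n0 c where nc: "0 < c" "c < lam j" "\<And>x. n0 \<le> x j \<Longrightarrow> mu j x \<le> c"
      using overload_j[OF lam_pos homog_lam homog_mu overload, of j] by blast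
    interpret qdrift lam mu M E j n0 c "max B0 c" Rmax
      by (rule qdrift.intro[OF Q qdrift_axioms.intro]) (use nc B0 Rmax in \<open>auto simp: max_def intro: order_trans[OF B0]\<close>)
    show ?thesis by (rule eventually_pos_j)
  qed
  have "AE \<omega> in M. (\<forall>j. eventually (\<lambda>n. YY x0 n \<omega> j \<noteq> 0) sequentially)
      \<and> (\<forall>m::nat. eventually (\<lambda>n. real m < TT x0 n \<omega>) sequentially)
      \<and> (\<forall>k e. 0 < E k e \<omega>)"
    using pos_j TT_infty[OF Rm Rm_pos, of x0] E_pos_AE by (simp add: AE_all_countable)
  then show ?thesis
  proof eventually_elim
    case (elim \<omega>)
    have "eventually (\<lambda>n. \<forall>j. YY x0 n \<omega> j \<noteq> 0) sequentially"
      using elim by (simp add: eventually_all_finite)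
    then obtain K where K: "\<And>n j. K \<le> n \<Longrightarrow> YY x0 n \<omega> j \<noteq> 0"
      by (auto simp: eventually_sequentially)
    have mono: "incseq (\<lambda>n. TT x0 n \<omega>)"
    proof (rule incseq_SucI)
      fix n
      have "0 < hld (YY x0 n \<omega>) (\<lambda>e. E n e \<omega>)" by (rule hld_pos) (use elim in auto)
      then show "TT x0 n \<omega> \<le> TT x0 (Suc n) \<omega>" by (simp add: TT_Suc)
    qed
    show ?case
      unfolding eventually_at_top_linorder
    proof (intro exI allI impI)
      fix t i assume t: "TT x0 K \<omega> \<le> t"
      have ex: "\<exists>k. t < TT x0 (Suc k) \<omega>"
      proof -
        have "eventually (\<lambda>n. real (nat \<lceil>t\<rceil>) < TT x0 n \<omega>) sequentially"
          using conjunct1[OF conjunct2[OF elim]] by simp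
        then obtain N where N: "\<And>n. N \<le> n \<Longrightarrow> real (nat \<lceil>t\<rceil>) < TT x0 n \<omega>"
          by (auto simp: eventually_sequentially)
        have "t \<le> real (nat \<lceil>t\<rceil>)" by linarith
        also have "\<dots> < TT x0 (Suc N) \<omega>" by (rule N) simp
        finally show ?thesis by blast
      qed
      define L where "L = (LEAST k. t < TT x0 (Suc k) \<omega>)"
      have L: "t < TT x0 (Suc L) \<omega>" unfolding L_def by (rule LeastI_ex[OF ex])
      have KL: "K \<le> L"
      proof (rule ccontr)
        assume "\<not> K \<le> L"
        then have "Suc L \<le> K" by simp
        then have "TT x0 (Suc L) \<omega> \<le> TT x0 K \<omega>" by (rule incseqD[OF mono])
        with L t show False by simp
      qed
      have jt: "jump_time lam mu x0 E k \<omega> = TT x0 k \<omega>" for k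
        by (simp only: jump_time_JT TT_def)
      have "queue_process lam mu x0 E t \<omega> = jump_chain lam mu x0 E (LEAST k. t < TT x0 (Suc k) \<omega>) \<omega>"
        by (simp only: queue_process_def jt)
      also have "\<dots> = YY x0 L \<omega>"
        by (simp only: jump_chain_JC YY_def L_def)
      finally have "queue_process lam mu x0 E t \<omega> = YY x0 L \<omega>" .
      then show "0 < queue_process lam mu x0 E t \<omega> i" using K[OF KL, of i] by simp
    qed
  qed
qed


end
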